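(* Let $A_{-1},A_0,A_1$ be nonnegative square matrices of finite dimension such that the block tridiagonal matrix $Q$ (with $A_0$ on the diagonal, $A_1$ on the superdiagonal, $A_{-1}$ on the subdiagonal, on the half-line) is irreducible and $\inf_{\theta\in\mathbb{R}}\mathrm{spr}(A_*(e^\theta))\le1$, where $A_*(z)=z^{-1}A_{-1}+A_0+zA_1$. Let $\underline\theta\le\bar\theta$ be the two real solutions of $\mathrm{spr}(A_*(e^\theta))=1$. Let $G$ be the minimal nonnegative solution of $G=A_{-1}+A_0G+A_1G^2$ and $G^r$ the minimal nonnegative solution of $G^r=A_1+A_0G^r+A_{-1}(G^r)^2$. Let $\boldsymbol{v}$ be a (nonnegative) right eigenvector of $G$ for the eigenvalue $e^{\underline\theta}$ and $\boldsymbol{v}^r$ a (nonnegative) right eigenvector of $G^r$ for the eigenvalue $e^{-\bar\theta}$. If $\underline\theta=\bar\theta$, then $\boldsymbol{v}=\boldsymbol{v}^r$ up to multiplication by a positive constant.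
   Context: It is known in this setting that $\mathrm{spr}(G)=e^{\underline\theta}$, $\mathrm{spr}(G^r)=e^{-\bar\theta}$, and $I-A_*(z)=(I-zR)(I-H)(I-z^{-1}G)$ with $R$ the minimal nonnegative solution of $R=R^2A_{-1}+RA_0+A_1$ and $H=A_0+A_1G$; also $A_*(e^{\theta})$ is irreducible. *)

theory Defs
  imports "HOL-Analysis.Analysis"
begin

definition nonneg_mat :: "real^'n^'m \<Rightarrow> bool" where
  "nonneg_mat A \<longleftrightarrow> (\<forall>i j. A $ i $ j \<ge> 0)"

definition nonneg_vec :: "real^'n \<Rightarrow> bool" where
  "nonneg_vec v \<longleftrightarrow> (\<forall>i. v $ i \<ge> 0)"

definition is_ceigenvalue :: "real^'n^'n \<Rightarrow> complex \<Rightarrow> bool" where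
  "is_ceigenvalue A l \<longleftrightarrow>
     (\<exists>v::complex^'n. v \<noteq> 0 \<and> (\<chi> i j. complex_of_real (A $ i $ j)) *v v = l *s v)"

definition spr :: "real^'n^'n \<Rightarrow> real" where
  "spr A = Max {cmod l | l. is_ceigenvalue A l}"

definition Astar :: "real^'n^'n \<Rightarrow> real^'n^'n \<Rightarrow> real^'n^'n \<Rightarrow> real \<Rightarrow> real^'n^'n" where
  "Astar Am A0 A1 z = (inverse z) *\<^sub>R Am + A0 + z *\<^sub>R A1"

text \<open>Block tridiagonal matrix Q on the half-line, states (level, phase).\<close>
definition Qmat :: "real^'n^'n \<Rightarrow> real^'n^'n \<Rightarrow> real^'n^'n \<Rightarrow> (nat \<times> 'n) \<Rightarrow> (nat \<times> 'n) \<Rightarrow> real" where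
  "Qmat Am A0 A1 x y =
     (let (k, i) = x; (l, j) = y in
       if l = k then A0 $ i $ j
       else if l = Suc k then A1 $ i $ j
       else if k = Suc l then Am $ i $ j
       else 0)"

definition irreducible_inf :: "('s \<Rightarrow> 's \<Rightarrow> real) \<Rightarrow> bool" where
  "irreducible_inf M \<longleftrightarrow> (\<forall>x y. (x, y) \<in> {(a, b). M a b > 0}\<^sup>+)"

definition minimal_nonneg_solution :: "(real^'n^'n \<Rightarrow> real^'n^'n) \<Rightarrow> real^'n^'n \<Rightarrow> bool" where
  "minimal_nonneg_solution F X \<longleftrightarrow>
     nonneg_mat X \<and> X = F X \<and>
     (\<forall>Y. nonneg_mat Y \<and> Y = F Y \<longrightarrow> (\<forall>i j. X $ i $ j \<le> Y $ i $ j))"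

end

theory Submission
  imports Defs
begin

lemma zero_prop:
  fixes M :: "real^'n^'n" and u :: "real^'n"
  assumes M: "nonneg_mat M" and u: "nonneg_vec u" and eig: "M *v u = u"
    and ui: "u $ i = 0" and path: "(i, j) \<in> {(a, b). M $ a $ b > 0}\<^sup>+"
  shows "u $ j = 0"
proof -
  have step: "u $ b = 0" if "u $ a = 0" "M $ a $ b > 0" for a b
  proof -
    have "(\<Sum>k\<in>UNIV. M $ a $ k * u $ k) = 0"
    proof -
      have "(M *v u) $ a = (\<Sum>k\<in>UNIV. M $ a $ k * u $ k)" by (simp add: matrix_vector_mult_def)
      then show ?thesis using eig that(1) by simp
    qed
    moreover have "\<forall>k\<in>UNIV. M $ a $ k * u $ k \<ge> 0"
      using M u by (auto simp: nonneg_mat_def nonneg_vec_def)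
    ultimately have "\<forall>k\<in>UNIV. M $ a $ k * u $ k = 0"
      using sum_nonneg_eq_0_iff[of UNIV "\<lambda>k. M $ a $ k * u $ k"] by auto
    then have "M $ a $ b * u $ b = 0" by auto
    with that(2) show ?thesis by simp
  qed
  from path show ?thesis
  proof (induction rule: trancl_induct)
    case (base y) then show ?case using step ui by auto
  next
    case (step y z) then show ?case using \<open>\<And>a b. u $ a = 0 \<Longrightarrow> 0 < M $ a $ b \<Longrightarrow> u $ b = 0\<close> by auto
  qed
qed

lemma pos_vec:
  fixes M :: "real^'n^'n" and u :: "real^'n"
  assumes M: "nonneg_mat M" and u: "nonneg_vec u" and eig: "M *v u = u"
    and irr: "\<forall>i j. (i, j) \<in> {(a, b). M $ a $ b > 0}\<^sup>+" and nz: "u \<noteq> 0"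
  shows "u $ i > 0"
proof (rule ccontr)
  assume "\<not> u $ i > 0"
  then have "u $ i = 0" using u by (metis nonneg_vec_def order_less_le)
  then have "\<forall>j. u $ j = 0" using zero_prop[OF M u eig] irr by blast
  then have "u = 0" by (simp add: vec_eq_iff)
  with nz show False by simp
qed

lemma perron_unique:
  fixes M :: "real^'n^'n" and v w :: "real^'n"
  assumes M: "nonneg_mat M" and irr: "\<forall>i j. (i, j) \<in> {(a, b). M $ a $ b > 0}\<^sup>+"
    and v: "nonneg_vec v" "v \<noteq> 0" "M *v v = v"
    and w: "nonneg_vec w" "w \<noteq> 0" "M *v w = w"
  shows "\<exists>c::real. c > 0 \<and> v = c *\<^sub>R w"
proof -
  have wp: "\<And>i. w $ i > 0" using pos_vec[OF M w(1) w(3) irr w(2)] .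
  define f where "f = (\<lambda>i. v $ i / w $ i)"
  define c where "c = Min (range f)"
  have fin: "finite (range f)" by simp
  have cle: "\<And>i. c \<le> f i" unfolding c_def using fin by simp
  have "c \<in> range f" unfolding c_def by (rule Min_in[OF fin]) auto
  then obtain i0 where i0: "c = f i0" by auto
  have c0: "c \<ge> 0" using i0 v(1) wp unfolding f_def nonneg_vec_def by (simp add: less_imp_le)
  define u where "u = v - c *\<^sub>R w"
  have un: "nonneg_vec u" unfolding nonneg_vec_def u_def
  proof
    fix i
    have "c \<le> v $ i / w $ i" using cle f_def by simp
    then have "c * w $ i \<le> v $ i" using wp[of i] by (simp add: pos_le_divide_eq)
    then show "0 \<le> (v - c *\<^sub>R w) $ i" by simp
  qed
  have ue: "M *v u = u" unfolding u_def
    using v(3) w(3) by (simp add: matrix_vector_mult_diff_distrib matrix_vector_mult_scaleR)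
  have u0: "u $ i0 = 0" unfolding u_def using i0 wp[of i0] by (simp add: f_def)
  have "u = 0"
  proof (rule ccontr)
    assume "u \<noteq> 0"
    then have "u $ i0 > 0" using pos_vec[OF M un ue irr] by blast
    with u0 show False by simp
  qed
  then have vc: "v = c *\<^sub>R w" unfolding u_def by simp
  then have "c \<noteq> 0" using v(2) by auto
  with c0 have "c > 0" by simp
  with vc show ?thesis by blast
qed

theorem lemma3p5:
  fixes Am A0 A1 G Gr :: "real^'n^'n" and v vr :: "real^'n" and thl thu :: real
  assumes nonneg: "nonneg_mat Am" "nonneg_mat A0" "nonneg_mat A1"
    and irr: "irreducible_inf (Qmat Am A0 A1)"
    and inf_le: "(INF \<theta>. spr (Astar Am A0 A1 (exp \<theta>))) \<le> 1"
    and th_le: "thl \<le> thu"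
    and thl_sol: "spr (Astar Am A0 A1 (exp thl)) = 1"
    and thu_sol: "spr (Astar Am A0 A1 (exp thu)) = 1"
    and th_only: "\<And>\<theta>. spr (Astar Am A0 A1 (exp \<theta>)) = 1 \<Longrightarrow> \<theta> = thl \<or> \<theta> = thu"
    and G: "minimal_nonneg_solution (\<lambda>X. Am + A0 ** X + A1 ** (X ** X)) G"
    and Gr: "minimal_nonneg_solution (\<lambda>X. A1 + A0 ** X + Am ** (X ** X)) Gr"
    and v: "nonneg_vec v" "v \<noteq> 0" "G *v v = exp thl *\<^sub>R v"
    and vr: "nonneg_vec vr" "vr \<noteq> 0" "Gr *v vr = exp (- thu) *\<^sub>R vr"
    and eq: "thl = thu"
  shows "\<exists>c::real. c > 0 \<and> v = c *\<^sub>R vr"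
proof -
  define z where "z = exp thl"
  have zp: "z > 0" unfolding z_def by simp
  define M where "M = Astar Am A0 A1 z"
  have Mnn: "nonneg_mat M"
    using nonneg zp unfolding M_def Astar_def nonneg_mat_def by (auto intro!: add_nonneg_nonneg)
  have Mpos: "M $ i $ j > 0" if "Am $ i $ j > 0 \<or> A0 $ i $ j > 0 \<or> A1 $ i $ j > 0" for i j
  proof -
    have a: "Am $ i $ j \<ge> 0" "A0 $ i $ j \<ge> 0" "A1 $ i $ j \<ge> 0"
      using nonneg unfolding nonneg_mat_def by auto
    have "M $ i $ j = inverse z * Am $ i $ j + A0 $ i $ j + z * A1 $ i $ j"
      unfolding M_def Astar_def by simp
    moreover have "inverse z * Am $ i $ j \<ge> 0" "z * A1 $ i $ j \<ge> 0" using a zp by auto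
    moreover have "Am $ i $ j > 0 \<Longrightarrow> inverse z * Am $ i $ j > 0" using zp by simp
    moreover have "A1 $ i $ j > 0 \<Longrightarrow> z * A1 $ i $ j > 0" using zp by simp
    ultimately show ?thesis using that a by linarith
  qed
  let ?Q = "{(a, b). Qmat Am A0 A1 a b > 0}"
  let ?R = "{(a, b). M $ a $ b > 0}"
  have proj: "(snd x, snd y) \<in> ?R\<^sup>+" if "(x, y) \<in> ?Q\<^sup>+" for x y
    using that
  proof (induction rule: trancl_induct)
    case (base y)
    then have "Qmat Am A0 A1 x y > 0" by simp
    then have "Am $ snd x $ snd y > 0 \<or> A0 $ snd x $ snd y > 0 \<or> A1 $ snd x $ snd y > 0"
      unfolding Qmat_def by (auto split: prod.splits if_splits)
    then show ?case using Mpos by auto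
  next
    case (step y w)
    then have "Qmat Am A0 A1 y w > 0" by simp
    then have "Am $ snd y $ snd w > 0 \<or> A0 $ snd y $ snd w > 0 \<or> A1 $ snd y $ snd w > 0"
      unfolding Qmat_def by (auto split: prod.splits if_splits)
    then have "(snd y, snd w) \<in> ?R" using Mpos by auto
    with step.IH show ?case by (rule trancl_into_trancl)
  qed
  have Mirr: "\<forall>i j. (i, j) \<in> ?R\<^sup>+"
  proof (intro allI)
    fix i j
    have "((0::nat, i), (0::nat, j)) \<in> ?Q\<^sup>+" using irr unfolding irreducible_inf_def by blast
    from proj[OF this] show "(i, j) \<in> ?R\<^sup>+" by simp
  qed
  have Geq: "G = Am + A0 ** G + A1 ** (G ** G)" using G unfolding minimal_nonneg_solution_def by auto
  have Greq: "Gr = A1 + A0 ** Gr + Am ** (Gr ** Gr)" using Gr unfolding minimal_nonneg_solution_def by auto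
  have Mv: "M *v v = v"
  proof -
    have "z *\<^sub>R v = G *v v" using v(3) z_def by simp
    also have "\<dots> = Am *v v + A0 *v (G *v v) + A1 *v (G *v (G *v v))"
      by (subst Geq) (simp add: matrix_vector_mult_add_rdistrib matrix_vector_mul_assoc)
    also have "\<dots> = Am *v v + z *\<^sub>R (A0 *v v) + (z * z) *\<^sub>R (A1 *v v)"
      using v(3) by (simp add: z_def matrix_vector_mult_scaleR)
    finally have e: "z *\<^sub>R v = Am *v v + z *\<^sub>R (A0 *v v) + (z * z) *\<^sub>R (A1 *v v)" .
    have "z *\<^sub>R (M *v v) = Am *v v + z *\<^sub>R (A0 *v v) + (z * z) *\<^sub>R (A1 *v v)"
      unfolding M_def Astar_def using zp
      by (simp add: matrix_vector_mult_add_rdistrib scaleR_matrix_vector_assoc[symmetric] scaleR_add_right)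
    with e have "z *\<^sub>R (M *v v) = z *\<^sub>R v" by simp
    then show ?thesis using zp by simp
  qed
  have Mvr: "M *v vr = vr"
  proof -
    define w where "w = inverse z"
    have wp: "w > 0" using zp w_def by simp
    have wz: "exp (- thu) = w" using eq z_def w_def by (simp add: exp_minus)
    have "w *\<^sub>R vr = Gr *v vr" using vr(3) wz by simp
    also have "\<dots> = A1 *v vr + A0 *v (Gr *v vr) + Am *v (Gr *v (Gr *v vr))"
      by (subst Greq) (simp add: matrix_vector_mult_add_rdistrib matrix_vector_mul_assoc)
    also have "\<dots> = A1 *v vr + w *\<^sub>R (A0 *v vr) + (w * w) *\<^sub>R (Am *v vr)"
      using vr(3) wz by (simp add: matrix_vector_mult_scaleR)
    finally have e: "w *\<^sub>R vr = A1 *v vr + w *\<^sub>R (A0 *v vr) + (w * w) *\<^sub>R (Am *v vr)" .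
    have "w *\<^sub>R (M *v vr) = (w * w) *\<^sub>R (Am *v vr) + w *\<^sub>R (A0 *v vr) + (w * z) *\<^sub>R (A1 *v vr)"
      unfolding M_def Astar_def w_def using zp
      by (simp add: matrix_vector_mult_add_rdistrib scaleR_matrix_vector_assoc[symmetric] scaleR_add_right)
    also have "w * z = 1" using zp w_def by simp
    finally have "w *\<^sub>R (M *v vr) = w *\<^sub>R vr" using e by (simp add: algebra_simps)
    then show ?thesis using wp by simp
  qed
  show ?thesis using perron_unique[OF Mnn Mirr v(1,2) Mv vr(1,2) Mvr] .
qed

end
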